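(* Let $\rho=\sum_{i=0}^n\lambda_i|D_n^i\rangle\langle D_n^i|$ with $\lambda_i\ge0$, $\sum_i\lambda_i=1$, and let $1\le k\le n$. Suppose the linear system in the unknowns $(a_{0},\dots,a_{n})$ $$\sum_{i=0}^n a_{i}\frac{\binom{k}{s}\binom{n-k}{i-s}}{\binom{n}{i}}=\sum_{i=0}^n\lambda_i\frac{\binom{k}{s}\binom{n-k}{i-s}}{\binom{n}{i}},\qquad 0\le s\le k,$$ has a solution with $a_i\ge0$ for all $i$ and $(a_0,\dots,a_n)\ne(\lambda_0,\dots,\lambda_n)$. Then $L(\rho)\ge k+1$.
   Context: Convention: $\binom{m}{i}=0$ if $i<0$ or $i>m$. Dicke states: $|D_n^i\rangle=\binom{n}{i}^{-1/2}\sum_{s\in\{0,1\}^n,\ \sum_js_j=i}|s_1\rangle\otimes\cdots\otimes|s_n\rangle$. For $S\subseteq[n]$, $\rho_S$ is the partial trace of $\rho$ over qubits outside $S$; $\mathcal C(\rho,\mathcal S)=\{\sigma\text{ density matrix}:\sigma_S=\rho_S\ \forall S\in\mathcal S\}$; $\mathcal S$ determines $\rho$ if $\mathcal C(\rho,\mathcal S)=\{\rho\}$; $L(\rho)=\min_{\mathcal S\text{ determines }\rho}\max_{S\in\mathcal S}|S|$. *)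

theory Defs
  imports Complex_Main
begin

text \<open>Computational basis states of n qubits (qubits indexed 0..n-1):
  functions nat => bool vanishing outside {0..<n}.\<close>

definition basis :: "nat \<Rightarrow> (nat \<Rightarrow> bool) set" where
  "basis n = {s. \<forall>i. n \<le> i \<longrightarrow> \<not> s i}"

type_synonym qmat = "(nat \<Rightarrow> bool) \<Rightarrow> (nat \<Rightarrow> bool) \<Rightarrow> complex"

definition density :: "nat \<Rightarrow> qmat \<Rightarrow> bool" where
  "density n M \<longleftrightarrow>
     (\<forall>x y. x \<notin> basis n \<or> y \<notin> basis n \<longrightarrow> M x y = 0) \<and>
     (\<forall>x y. M y x = cnj (M x y)) \<and>
     (\<forall>v :: (nat \<Rightarrow> bool) \<Rightarrow> complex.
        let q = (\<Sum>x\<in>basis n. \<Sum>y\<in>basis n. cnj (v x) * M x y * v y)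
        in Im q = 0 \<and> 0 \<le> Re q) \<and>
     (\<Sum>x\<in>basis n. M x x) = 1"

definition sub_basis :: "nat set \<Rightarrow> (nat \<Rightarrow> bool) set" where
  "sub_basis S = {a. \<forall>i. i \<notin> S \<longrightarrow> \<not> a i}"

definition merge :: "nat set \<Rightarrow> (nat \<Rightarrow> bool) \<Rightarrow> (nat \<Rightarrow> bool) \<Rightarrow> (nat \<Rightarrow> bool)" where
  "merge S a z = (\<lambda>i. if i \<in> S then a i else z i)"

text \<open>Partial trace over the qubits outside S (for S \<subseteq> {0..<n}); the
  reduced matrix has entries indexed by a, b \<in> sub_basis S.\<close>
definition ptrace :: "nat \<Rightarrow> nat set \<Rightarrow> qmat \<Rightarrow> qmat" where
  "ptrace n S M a b =
     (\<Sum>z\<in>basis n \<inter> sub_basis ({0..<n} - S). M (merge S a z) (merge S b z))"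

definition marg_eq :: "nat \<Rightarrow> nat set \<Rightarrow> qmat \<Rightarrow> qmat \<Rightarrow> bool" where
  "marg_eq n S M N \<longleftrightarrow>
     (\<forall>a\<in>sub_basis S. \<forall>b\<in>sub_basis S. ptrace n S M a b = ptrace n S N a b)"

definition compat :: "nat \<Rightarrow> qmat \<Rightarrow> nat set set \<Rightarrow> qmat set" where
  "compat n \<rho> \<S> = {\<sigma>. density n \<sigma> \<and> (\<forall>S\<in>\<S>. marg_eq n S \<sigma> \<rho>)}"

definition determines :: "nat \<Rightarrow> nat set set \<Rightarrow> qmat \<Rightarrow> bool" where
  "determines n \<S> \<rho> \<longleftrightarrow> (\<forall>S\<in>\<S>. S \<subseteq> {0..<n}) \<and> compat n \<rho> \<S> = {\<rho>}"

definition Lval :: "nat \<Rightarrow> qmat \<Rightarrow> nat" where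
  "Lval n \<rho> = (LEAST m. \<exists>\<S>. determines n \<S> \<rho> \<and> (\<forall>S\<in>\<S>. card S \<le> m))"

definition dicke :: "nat \<Rightarrow> nat \<Rightarrow> (nat \<Rightarrow> bool) \<Rightarrow> complex" where
  "dicke n i s = (if s \<in> basis n \<and> card {j. j < n \<and> s j} = i
                  then complex_of_real (1 / sqrt (real (n choose i))) else 0)"

definition dicke_mix :: "nat \<Rightarrow> (nat \<Rightarrow> real) \<Rightarrow> qmat" where
  "dicke_mix n lam x y = (\<Sum>i\<le>n. complex_of_real (lam i) * dicke n i x * cnj (dicke n i y))"

text \<open>Binomial coefficient with the convention binom m i = 0 for i < 0 or i > m.\<close>
definition binom :: "nat \<Rightarrow> int \<Rightarrow> real" where
  "binom m i = (if i < 0 then 0 else real (m choose nat i))"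

end

theory Submission imports Defs begin

definition wt :: "nat \<Rightarrow> (nat \<Rightarrow> bool) \<Rightarrow> nat" where
  "wt n x = card {j. j < n \<and> x j}"

lemma wt_le: "wt n x \<le> n"
proof -
  have "{j. j < n \<and> x j} \<subseteq> {..<n}" by auto
  then show ?thesis unfolding wt_def by (metis card_lessThan card_mono finite_lessThan)
qed

lemma basis_sub_finite: "finite (basis n \<inter> sub_basis T)"
proof -
  have "basis n \<subseteq> (\<lambda>A j. j \<in> A) ` Pow {..<n}"
  proof
    fix s assume "s \<in> basis n"
    then have e: "s = (\<lambda>j. j \<in> {j. j < n \<and> s j})" unfolding basis_def by (auto simp: not_le[symmetric])
    have m: "{j. j < n \<and> s j} \<in> Pow {..<n}" by auto
    show "s \<in> (\<lambda>A j. j \<in> A) ` Pow {..<n}" by (rule image_eqI[where f="\<lambda>A j. j \<in> A", OF e m])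
  qed
  then have "finite (basis n)" by (rule finite_subset) auto
  then show ?thesis by auto
qed

lemma basis_finite: "finite (basis n)"
proof -
  have "basis n \<inter> sub_basis {0..<n} = basis n" unfolding basis_def sub_basis_def by auto
  then show ?thesis using basis_sub_finite[of n "{0..<n}"] by simp
qed

lemma count_wt:
  assumes "T \<subseteq> {0..<n}"
  shows "card {z \<in> basis n \<inter> sub_basis T. wt n z = m} = card T choose m"
proof -
  have fT: "finite T" using assms finite_subset by blast
  have "bij_betw (\<lambda>z. {j. z j}) {z \<in> basis n \<inter> sub_basis T. wt n z = m} {B. B \<subseteq> T \<and> card B = m}"
  proof (rule bij_betw_byWitness[where f'="\<lambda>A j. j \<in> A"])
    show "\<forall>a\<in>{z \<in> basis n \<inter> sub_basis T. wt n z = m}. (\<lambda>j. j \<in> {j. a j}) = a" by auto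
    show "\<forall>a'\<in>{B. B \<subseteq> T \<and> card B = m}. {j. j \<in> a'} = a'" by auto
    show "(\<lambda>z. {j. z j}) ` {z \<in> basis n \<inter> sub_basis T. wt n z = m} \<subseteq> {B. B \<subseteq> T \<and> card B = m}"
    proof (rule image_subsetI)
      fix z assume "z \<in> {z \<in> basis n \<inter> sub_basis T. wt n z = m}"
      then have z: "z \<in> basis n" "z \<in> sub_basis T" "m = wt n z" by auto
      have "{j. j < n \<and> z j} = {j. z j}" using z(1) unfolding basis_def by (auto simp: not_le[symmetric])
      then show "{j. z j} \<in> {B. B \<subseteq> T \<and> card B = m}" using z(2,3) unfolding wt_def sub_basis_def by auto
    qed
    show "(\<lambda>A j. j \<in> A) ` {B. B \<subseteq> T \<and> card B = m} \<subseteq> {z \<in> basis n \<inter> sub_basis T. wt n z = m}"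
    proof (rule image_subsetI)
      fix B assume "B \<in> {B. B \<subseteq> T \<and> card B = m}"
      then have B: "B \<subseteq> T" "m = card B" by auto
      have "{j. j < n \<and> j \<in> B} = B" using B assms by auto
      then show "(\<lambda>j. j \<in> B) \<in> {z \<in> basis n \<inter> sub_basis T. wt n z = m}"
        using B assms unfolding basis_def sub_basis_def wt_def by auto
    qed
  qed
  then have "card {z \<in> basis n \<inter> sub_basis T. wt n z = m} = card {B. B \<subseteq> T \<and> card B = m}"
    by (rule bij_betw_same_card)
  also have "\<dots> = card T choose m" using n_subsets[OF fT] by simp
  finally show ?thesis .
qed

lemma dicke_prod:
  "dicke n i x * cnj (dicke n i y) =
    (if x \<in> basis n \<and> y \<in> basis n \<and> wt n x = i \<and> wt n y = i then complex_of_real (1 / real (n choose i)) else 0)"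
proof -
  have "(1 / sqrt (real (n choose i))) * (1 / sqrt (real (n choose i))) = 1 / real (n choose i)"
    by (simp add: real_sqrt_mult[symmetric])
  then show ?thesis unfolding dicke_def wt_def
    by (auto simp del: of_real_divide simp: of_real_mult[symmetric])
qed

lemma dm:
  "dicke_mix n c x y = (if x \<in> basis n \<and> y \<in> basis n \<and> wt n x = wt n y
     then complex_of_real (c (wt n x) / real (n choose wt n x)) else 0)"
proof -
  have "dicke_mix n c x y = (\<Sum>i\<le>n. (if i = wt n x then (if x \<in> basis n \<and> y \<in> basis n \<and> wt n x = wt n y
     then complex_of_real (c (wt n x) / real (n choose wt n x)) else 0) else 0))"
    unfolding dicke_mix_def
    by (intro sum.cong refl) (auto simp: mult.assoc dicke_prod)
  also have "\<dots> = (if x \<in> basis n \<and> y \<in> basis n \<and> wt n x = wt n y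
     then complex_of_real (c (wt n x) / real (n choose wt n x)) else 0)"
    using wt_le[of n x] by (subst sum.delta) auto
  finally show ?thesis .
qed

lemma cnj_dicke[simp]: "cnj (dicke n i x) = dicke n i x"
  unfolding dicke_def by simp

lemma dens:
  assumes c0: "\<forall>i\<le>n. 0 \<le> c i" and c1: "(\<Sum>i\<le>n. c i) = 1"
  shows "density n (dicke_mix n c)"
  unfolding density_def
proof (intro conjI allI impI)
  fix x y
  show "x \<notin> basis n \<or> y \<notin> basis n \<Longrightarrow> dicke_mix n c x y = 0" by (auto simp: dm)
  show "dicke_mix n c y x = cnj (dicke_mix n c x y)" by (auto simp: dm)
next
  fix v :: "(nat \<Rightarrow> bool) \<Rightarrow> complex"
  define B where "B = basis n"
  define u where "u i = (\<Sum>y\<in>B. dicke n i y * v y)" for i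
  have "(\<Sum>x\<in>B. \<Sum>y\<in>B. cnj (v x) * dicke_mix n c x y * v y)
      = (\<Sum>x\<in>B. \<Sum>y\<in>B. \<Sum>i\<le>n. of_real (c i) * (dicke n i x * cnj (v x)) * (dicke n i y * v y))"
    unfolding dicke_mix_def by (simp add: sum_distrib_left sum_distrib_right mult_ac)
  also have "\<dots> = (\<Sum>x\<in>B. \<Sum>i\<le>n. \<Sum>y\<in>B. of_real (c i) * (dicke n i x * cnj (v x)) * (dicke n i y * v y))"
    by (intro sum.cong refl) (rule sum.swap)
  also have "\<dots> = (\<Sum>i\<le>n. \<Sum>x\<in>B. \<Sum>y\<in>B. of_real (c i) * (dicke n i x * cnj (v x)) * (dicke n i y * v y))"
    by (rule sum.swap)
  also have "\<dots> = (\<Sum>i\<le>n. of_real (c i) * (cnj (u i) * u i))"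
    unfolding u_def by (simp add: sum_distrib_left sum_product mult_ac)
  also have "\<dots> = of_real (\<Sum>i\<le>n. c i * (cmod (u i))^2)"
  proof -
    have "cnj (u i) * u i = of_real ((cmod (u i))^2)" for i by (metis complex_norm_square mult.commute)
    then show ?thesis by (simp add: of_real_sum)
  qed
  finally have q: "(\<Sum>x\<in>B. \<Sum>y\<in>B. cnj (v x) * dicke_mix n c x y * v y) = of_real (\<Sum>i\<le>n. c i * (cmod (u i))^2)" .
  have "0 \<le> (\<Sum>i\<le>n. c i * (cmod (u i))^2)" using c0 by (intro sum_nonneg) auto
  then show "let q = (\<Sum>x\<in>basis n. \<Sum>y\<in>basis n. cnj (v x) * dicke_mix n c x y * v y) in Im q = 0 \<and> 0 \<le> Re q"
    using q unfolding B_def Let_def by simp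
next
  have "(\<Sum>x\<in>basis n. dicke_mix n c x x) = (\<Sum>x\<in>basis n. complex_of_real (c (wt n x) / real (n choose wt n x)))"
    by (intro sum.cong refl) (simp add: dm)
  also have "\<dots> = (\<Sum>i\<le>n. \<Sum>x\<in>{x. x \<in> basis n \<and> wt n x = i}. complex_of_real (c (wt n x) / real (n choose wt n x)))"
    by (rule sum.group[symmetric]) (auto simp: basis_finite wt_le)
  also have "\<dots> = (\<Sum>i\<le>n. of_real (c i))"
  proof (intro sum.cong refl)
    fix i assume "i \<in> {..n}"
    then have ch: "real (n choose i) \<noteq> 0" by simp
    have "card {x. x \<in> basis n \<and> wt n x = i} = n choose i"
      using count_wt[of "{0..<n}" n i] by (simp add: Int_absorb2 basis_def sub_basis_def subset_iff not_le[symmetric] Collect_conj_eq[symmetric])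
    then show "(\<Sum>x\<in>{x. x \<in> basis n \<and> wt n x = i}. complex_of_real (c (wt n x) / real (n choose wt n x))) = of_real (c i)"
      using ch by simp
  qed
  also have "\<dots> = 1" using c1 by (metis of_real_1 of_real_sum)
  finally show "(\<Sum>x\<in>basis n. dicke_mix n c x x) = 1" .
qed

lemma merge_props:
  assumes S: "S \<subseteq> {0..<n}" and a: "\<alpha> \<in> sub_basis S"
    and z: "z \<in> basis n \<inter> sub_basis ({0..<n} - S)"
  shows "merge S \<alpha> z \<in> basis n" "wt n (merge S \<alpha> z) = wt n \<alpha> + wt n z"
proof -
  show "merge S \<alpha> z \<in> basis n" using S a z unfolding merge_def basis_def sub_basis_def by auto
  have e: "{j. j < n \<and> merge S \<alpha> z j} = {j. j < n \<and> \<alpha> j} \<union> {j. j < n \<and> z j}"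
    using S a z unfolding merge_def basis_def sub_basis_def by auto
  have d: "{j. j < n \<and> \<alpha> j} \<inter> {j. j < n \<and> z j} = {}"
    using S a z unfolding merge_def basis_def sub_basis_def by auto
  show "wt n (merge S \<alpha> z) = wt n \<alpha> + wt n z"
    unfolding wt_def e by (rule card_Un_disjoint) (use d in auto)
qed

lemma ptrace_dm:
  assumes S: "S \<subseteq> {0..<n}" and a: "\<alpha> \<in> sub_basis S" and b: "\<beta> \<in> sub_basis S"
  shows "ptrace n S (dicke_mix n c) \<alpha> \<beta> = (if wt n \<alpha> = wt n \<beta> then
     of_real (\<Sum>i\<le>n. c i * binom (n - card S) (int i - int (wt n \<alpha>)) / binom n (int i)) else 0)"
proof -
  define Z where "Z = basis n \<inter> sub_basis ({0..<n} - S)"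
  define r where "r = wt n \<alpha>"
  define g where "g i = complex_of_real (c i / real (n choose i))" for i
  have fZ: "finite Z" unfolding Z_def by (rule basis_sub_finite)
  have "ptrace n S (dicke_mix n c) \<alpha> \<beta> = (\<Sum>z\<in>Z. if wt n \<alpha> = wt n \<beta> then g (r + wt n z) else 0)"
    unfolding ptrace_def Z_def[symmetric]
  proof (intro sum.cong refl)
    fix z assume z: "z \<in> Z"
    show "dicke_mix n c (merge S \<alpha> z) (merge S \<beta> z) = (if wt n \<alpha> = wt n \<beta> then g (r + wt n z) else 0)"
      using merge_props[OF S a z[unfolded Z_def]] merge_props[OF S b z[unfolded Z_def]]
      by (simp add: dm g_def r_def)
  qed
  also have "\<dots> = (if wt n \<alpha> = wt n \<beta> then (\<Sum>z\<in>Z. g (r + wt n z)) else 0)" by simp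
  also have "(\<Sum>z\<in>Z. g (r + wt n z)) = (\<Sum>i\<le>n. \<Sum>z\<in>{z. z \<in> Z \<and> r + wt n z = i}. g (r + wt n z))"
  proof (rule sum.group[symmetric])
    show "(\<lambda>z. r + wt n z) ` Z \<subseteq> {..n}"
    proof (rule image_subsetI)
      fix z assume "z \<in> Z"
      then show "r + wt n z \<in> {..n}" using merge_props(2)[OF S a, of z] wt_le[of n "merge S \<alpha> z"]
        unfolding Z_def r_def by simp
    qed
  qed (use fZ in auto)
  also have "\<dots> = (\<Sum>i\<le>n. of_real (c i * binom (n - card S) (int i - int r) / binom n (int i)))"
  proof (intro sum.cong refl)
    fix i assume "i \<in> {..n}"
    have cardZ: "real (card {z. z \<in> Z \<and> r + wt n z = i}) = binom (n - card S) (int i - int r)"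
    proof (cases "i < r")
      case True
      then have "{z. z \<in> Z \<and> r + wt n z = i} = {}" by auto
      then show ?thesis using True unfolding binom_def by simp
    next
      case False
      have "{z. z \<in> Z \<and> r + wt n z = i} = {z \<in> basis n \<inter> sub_basis ({0..<n} - S). wt n z = i - r}"
        using False unfolding Z_def by auto
      moreover have "card ({0..<n} - S) = n - card S" using S by (simp add: card_Diff_subset finite_subset)
      ultimately have "card {z. z \<in> Z \<and> r + wt n z = i} = (n - card S) choose (i - r)"
        using count_wt[of "{0..<n} - S" n "i - r"] by auto
      moreover have "nat (int i - int r) = i - r" using False by simp
      ultimately show ?thesis using False unfolding binom_def by simp
    qed
    show "(\<Sum>z\<in>{z. z \<in> Z \<and> r + wt n z = i}. g (r + wt n z)) = of_real (c i * binom (n - card S) (int i - int r) / binom n (int i))"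
    proof -
      have "(\<Sum>z\<in>{z. z \<in> Z \<and> r + wt n z = i}. g (r + wt n z)) = (\<Sum>z\<in>{z. z \<in> Z \<and> r + wt n z = i}. g i)"
        by (intro sum.cong refl) auto
      also have "\<dots> = of_nat (card {z. z \<in> Z \<and> r + wt n z = i}) * g i" by simp
      also have "\<dots> = of_real (real (card {z. z \<in> Z \<and> r + wt n z = i}) * (c i / real (n choose i)))"
        unfolding g_def by simp
      also have "\<dots> = of_real (c i * binom (n - card S) (int i - int r) / binom n (int i))"
        unfolding cardZ by (simp add: binom_def)
      finally show ?thesis .
    qed
  qed
  also have "\<dots> = of_real (\<Sum>i\<le>n. c i * binom (n - card S) (int i - int r) / binom n (int i))"
    by (simp add: of_real_sum)
  finally show ?thesis unfolding r_def by simp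
qed

lemma pascal_binom: "binom (Suc m) j = binom m j + binom m (j - 1)"
proof (cases "j \<le> 0")
  case True
  then show ?thesis unfolding binom_def by auto
next
  case False
  then have "nat j = Suc (nat (j - 1))" by simp
  then show ?thesis using False unfolding binom_def by simp
qed

lemma F_zero:
  fixes d :: "nat \<Rightarrow> real"
  assumes kn: "k \<le> n"
    and hk: "\<forall>s\<le>k. (\<Sum>i\<le>n. d i * binom (n - k) (int i - int s) / binom n (int i)) = 0"
  shows "t \<le> k \<Longrightarrow> r \<le> t \<Longrightarrow> (\<Sum>i\<le>n. d i * binom (n - t) (int i - int r) / binom n (int i)) = 0"
proof -
  define F where "F t r = (\<Sum>i\<le>n. d i * binom (n - t) (int i - int r) / binom n (int i))" for t r
  have key: "\<forall>r\<le>k - m. F (k - m) r = 0" if "m \<le> k" for m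
    using that
  proof (induction m)
    case 0
    then show ?case using hk unfolding F_def by simp
  next
    case (Suc m)
    show ?case
    proof (intro allI impI)
      fix r assume r: "r \<le> k - Suc m"
      define t where "t = k - Suc m"
      have t1: "k - m = Suc t" using Suc.prems unfolding t_def by simp
      have nt: "n - t = Suc (n - Suc t)" using Suc.prems kn unfolding t_def by simp
      have "F t r = (\<Sum>i\<le>n. d i * binom (n - Suc t) (int i - int r) / binom n (int i)
             + d i * binom (n - Suc t) (int i - int (Suc r)) / binom n (int i))"
        unfolding F_def nt pascal_binom
      proof (intro sum.cong refl)
        fix i
        have "int i - int r - 1 = int i - int (Suc r)" by simp
        then show "d i * (binom (n - Suc t) (int i - int r) + binom (n - Suc t) (int i - int r - 1)) / binom n (int i) =
          d i * binom (n - Suc t) (int i - int r) / binom n (int i) + d i * binom (n - Suc t) (int i - int (Suc r)) / binom n (int i)"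
          by (simp only: distrib_left add_divide_distrib)
      qed
      also have "\<dots> = F (Suc t) r + F (Suc t) (Suc r)"
        unfolding F_def by (rule sum.distrib)
      also have "\<dots> = 0" using Suc.IH Suc.prems r t1 unfolding t_def by simp
      finally show "F (k - Suc m) r = 0" unfolding t_def .
    qed
  qed
  moreover assume "t \<le> k" "r \<le> t"
  ultimately have "\<forall>r\<le>k - (k - t). F (k - (k - t)) r = 0" using key[of "k - t"] by simp
  moreover have "k - (k - t) = t" using \<open>t \<le> k\<close> by simp
  ultimately show ?thesis using \<open>r \<le> t\<close> unfolding F_def by simp
qed

lemma ptrace_full:
  assumes "x \<in> sub_basis {0..<n}" "y \<in> sub_basis {0..<n}"
  shows "ptrace n {0..<n} M x y = M x y"
proof -
  have Z: "basis n \<inter> sub_basis ({0..<n} - {0..<n}) = {\<lambda>_. False}"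
    unfolding basis_def sub_basis_def by auto
  have "merge {0..<n} x (\<lambda>_. False) = x" "merge {0..<n} y (\<lambda>_. False) = y"
    using assms unfolding merge_def sub_basis_def by auto
  then show ?thesis unfolding ptrace_def Z by simp
qed

lemma sub_basis_full: "sub_basis {0..<n} = basis n"
  unfolding basis_def sub_basis_def by (auto simp: not_le[symmetric])

lemma full_determines:
  assumes "density n \<rho>"
  shows "determines n {{0..<n}} \<rho>"
  unfolding determines_def
proof (intro conjI)
  show "\<forall>S\<in>{{0..<n}}. S \<subseteq> {0..<n}" by simp
  show "compat n \<rho> {{0..<n}} = {\<rho>}"
  proof
    show "{\<rho>} \<subseteq> compat n \<rho> {{0..<n}}" using assms unfolding compat_def marg_eq_def by simp
    show "compat n \<rho> {{0..<n}} \<subseteq> {\<rho>}"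
    proof
      fix \<sigma> assume "\<sigma> \<in> compat n \<rho> {{0..<n}}"
      then have d: "density n \<sigma>" and m: "marg_eq n {0..<n} \<sigma> \<rho>" unfolding compat_def by auto
      have "\<sigma> x y = \<rho> x y" for x y
      proof (cases "x \<in> basis n \<and> y \<in> basis n")
        case True
        then have "ptrace n {0..<n} \<sigma> x y = ptrace n {0..<n} \<rho> x y" using m unfolding marg_eq_def sub_basis_full by blast
        then show ?thesis using ptrace_full[of x n y] True unfolding sub_basis_full by simp
      next
        case False
        then have "\<sigma> x y = 0" "\<rho> x y = 0" using d assms unfolding density_def by blast+
        then show ?thesis by simp
      qed
      then show "\<sigma> \<in> {\<rho>}" by auto
    qed
  qed
qed

theorem mainTheorem15:
  fixes n k :: nat and lam :: "nat \<Rightarrow> real"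
  assumes "\<forall>i\<le>n. 0 \<le> lam i"
    and "(\<Sum>i\<le>n. lam i) = 1"
    and "1 \<le> k" and "k \<le> n"
    and "\<exists>a :: nat \<Rightarrow> real. (\<forall>i\<le>n. 0 \<le> a i) \<and> (\<exists>i\<le>n. a i \<noteq> lam i) \<and>
           (\<forall>s\<le>k. (\<Sum>i\<le>n. a i * (binom k (int s) * binom (n - k) (int i - int s) / binom n (int i)))
                 = (\<Sum>i\<le>n. lam i * (binom k (int s) * binom (n - k) (int i - int s) / binom n (int i))))"
  shows "k + 1 \<le> Lval n (dicke_mix n lam)"
proof -
  obtain a :: "nat \<Rightarrow> real" where a0: "\<forall>i\<le>n. 0 \<le> a i" and adiff: "\<exists>i\<le>n. a i \<noteq> lam i"
    and aeq: "\<forall>s\<le>k. (\<Sum>i\<le>n. a i * (binom k (int s) * binom (n - k) (int i - int s) / binom n (int i)))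
                 = (\<Sum>i\<le>n. lam i * (binom k (int s) * binom (n - k) (int i - int s) / binom n (int i)))"
    using assms(5) by blast
  define d where "d i = a i - lam i" for i
  have dsum: "(\<Sum>i\<le>n. d i * X i) = (\<Sum>i\<le>n. a i * X i) - (\<Sum>i\<le>n. lam i * X i)" for X
    unfolding d_def by (simp add: sum_subtractf left_diff_distrib)
  have hk: "\<forall>s\<le>k. (\<Sum>i\<le>n. d i * binom (n - k) (int i - int s) / binom n (int i)) = 0"
  proof (intro allI impI)
    fix s assume s: "s \<le> k"
    define B where "B = binom k (int s)"
    have B0: "B \<noteq> 0" using s unfolding B_def binom_def by simp
    have fac: "(\<Sum>i\<le>n. c i * (B * binom (n - k) (int i - int s) / binom n (int i)))
       = B * (\<Sum>i\<le>n. c i * (binom (n - k) (int i - int s) / binom n (int i)))" for c :: "nat \<Rightarrow> real"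
      unfolding sum_distrib_left by (intro sum.cong refl) (simp add: mult.left_commute)
    have "(\<Sum>i\<le>n. a i * (B * binom (n - k) (int i - int s) / binom n (int i)))
       = (\<Sum>i\<le>n. lam i * (B * binom (n - k) (int i - int s) / binom n (int i)))"
      using aeq s unfolding B_def by blast
    then have "B * (\<Sum>i\<le>n. a i * (binom (n - k) (int i - int s) / binom n (int i)))
        = B * (\<Sum>i\<le>n. lam i * (binom (n - k) (int i - int s) / binom n (int i)))"
      unfolding fac .
    then have "(\<Sum>i\<le>n. a i * (binom (n - k) (int i - int s) / binom n (int i)))
        = (\<Sum>i\<le>n. lam i * (binom (n - k) (int i - int s) / binom n (int i)))" using B0 by simp
    then show "(\<Sum>i\<le>n. d i * binom (n - k) (int i - int s) / binom n (int i)) = 0"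
      using dsum[of "\<lambda>i. binom (n - k) (int i - int s) / binom n (int i)"] by simp
  qed
  note FZ = F_zero[OF assms(4) hk]
  have "(\<Sum>i\<le>n. d i) = (\<Sum>i\<le>n. d i * binom (n - 0) (int i - int 0) / binom n (int i))"
    by (intro sum.cong refl) (simp add: binom_def)
  also have "\<dots> = 0" by (rule FZ) auto
  finally have "(\<Sum>i\<le>n. a i) = 1" using assms(2) unfolding d_def by (simp add: sum_subtractf)
  then have da: "density n (dicke_mix n a)" using a0 by (rule_tac dens) auto
  have dl: "density n (dicke_mix n lam)" using assms(1,2) by (rule dens)
  obtain i0 where i0: "i0 \<le> n" "a i0 \<noteq> lam i0" using adiff by blast
  have neq: "dicke_mix n a \<noteq> dicke_mix n lam"
  proof
    assume e: "dicke_mix n a = dicke_mix n lam"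
    define x where "x = (\<lambda>j::nat. j < i0)"
    have xb: "x \<in> basis n" using i0 unfolding x_def basis_def by auto
    have "{j. j < n \<and> j < i0} = {..<i0}" using i0 by auto
    then have xw: "wt n x = i0" unfolding wt_def x_def by simp
    have "dicke_mix n a x x = dicke_mix n lam x x" using e by simp
    then have "a i0 / real (n choose i0) = lam i0 / real (n choose i0)" using xb xw by (simp add: dm)
    then show False using i0 by (simp add: divide_cancel_right)
  qed
  have marg: "marg_eq n S (dicke_mix n a) (dicke_mix n lam)" if S: "S \<subseteq> {0..<n}" "card S \<le> k" for S
    unfolding marg_eq_def
  proof (intro ballI)
    fix \<alpha> \<beta> assume ab: "\<alpha> \<in> sub_basis S" "\<beta> \<in> sub_basis S"
    have fS: "finite S" using S(1) finite_subset by blast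
    have "{j. j < n \<and> \<alpha> j} \<subseteq> S" using ab(1) unfolding sub_basis_def by auto
    then have r: "wt n \<alpha> \<le> card S" unfolding wt_def using fS card_mono by blast
    have "(\<Sum>i\<le>n. d i * (binom (n - card S) (int i - int (wt n \<alpha>)) / binom n (int i))) = 0"
      using FZ[OF S(2) r] by (simp add: times_divide_eq_right)
    then have eq: "(\<Sum>i\<le>n. a i * binom (n - card S) (int i - int (wt n \<alpha>)) / binom n (int i))
      = (\<Sum>i\<le>n. lam i * binom (n - card S) (int i - int (wt n \<alpha>)) / binom n (int i))"
      using dsum[of "\<lambda>i. binom (n - card S) (int i - int (wt n \<alpha>)) / binom n (int i)"] by simp
    then show "ptrace n S (dicke_mix n a) \<alpha> \<beta> = ptrace n S (dicke_mix n lam) \<alpha> \<beta>"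
      by (simp only: ptrace_dm[OF S(1) ab] eq)
  qed
  define P where "P m = (\<exists>\<S>. determines n \<S> (dicke_mix n lam) \<and> (\<forall>S\<in>\<S>. card S \<le> m))" for m
  have Pn: "P n" unfolding P_def
  proof (intro exI conjI)
    show "determines n {{0..<n}} (dicke_mix n lam)" using full_determines[OF dl] .
    show "\<forall>S\<in>{{0..<n}}. card S \<le> n" by simp
  qed
  have bound: "k + 1 \<le> m" if Pm: "P m" for m
  proof (rule ccontr)
    assume "\<not> k + 1 \<le> m"
    then have mk: "m \<le> k" by simp
    obtain \<S> where det: "determines n \<S> (dicke_mix n lam)" and cS: "\<forall>S\<in>\<S>. card S \<le> m"
      using Pm unfolding P_def by blast
    have "dicke_mix n a \<in> compat n (dicke_mix n lam) \<S>"
    proof -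
      have "\<forall>S\<in>\<S>. marg_eq n S (dicke_mix n a) (dicke_mix n lam)"
      proof
        fix S assume "S \<in> \<S>"
        then have "S \<subseteq> {0..<n}" "card S \<le> k" using det cS mk unfolding determines_def by auto
        then show "marg_eq n S (dicke_mix n a) (dicke_mix n lam)" by (rule marg)
      qed
      then show ?thesis unfolding compat_def using da by simp
    qed
    then show False using det neq unfolding determines_def by simp
  qed
  have "Lval n (dicke_mix n lam) = (LEAST m. P m)" unfolding Lval_def P_def by simp
  also have "k + 1 \<le> (LEAST m. P m)" using Pn bound by (rule LeastI2)
  finally show ?thesis by simp
qed

end
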